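(* Let $V$ be a finite-dimensional real vector space with preferred basis $(e_1,\dots,e_n)$, and let $X(V)=\bigoplus_{j,k} S^j(V)\otimes\Lambda_k(V)$ with the product and norm $\|\cdot\|$ described below. Then $\|\cdot\|$ is a norm on $X(V)$ and for all $A,B\in X(V)$, $$\|A\cdot B\|\le \|A\|\,\|B\|.$$
   Context: $S^j(V)$ is the $j$-th symmetric power and $\Lambda_k(V)$ the $k$-th exterior power of $V$. For a list $U=(u_1,\dots,u_j)$ of vectors write $\nabla^j_U=u_1u_2\cdots u_j\in S^j(V)$ (symmetric product), and for $W=(w_1,\dots,w_k)$ write $\alpha(W)=w_1\wedge\dots\wedge w_k$; write $\nabla^j_U\alpha$ for $\nabla^j_U\otimes\alpha$. The product on $X(V)$ is defined on such elements by $\nabla^{j_1}_{U_1}\alpha(W_1)\cdot\nabla^{j_2}_{U_2}\alpha(W_2)=\nabla^{j_1+j_2}_{(U_1,U_2)}\alpha(W_1,W_2)/2^{j_1+j_2}$ for $j_1,j_2\ge1$ (concatenated lists), as scalar multiplication if $j_1=0$ or $j_2=0$, and extended bilinearly. The inner product on $V$ declares $(e_i)$ orthonormal; $M(\alpha)$ is the mass of a simple $k$-vector. Define $\|\nabla^j_U\alpha\|_j=|u_1|\cdots|u_j|M(\alpha)$. The basis of $V$ generates a basis of $S^j(V)\otimes\Lambda_k(V)$; for $A^j=\sum_i a_i\nabla^j_{U_i}\alpha_i$ written in this basis set $\|A^j\|_j=\sum_i|a_i|\,\|\nabla^j_{U_i}\alpha_i\|_j$, and for $A=\sum_j A^j$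 (with $A^j$ the $S^j$-components) set $\|A\|=\sum_j\|A^j\|_j$. *)

theory Defs
  imports Complex_Main "HOL-Library.Multiset"
begin

text \<open>Coordinate model of X(V) for V = R^n with orthonormal preferred basis e_0,...,e_(n-1).
  The basis of S^j(V) tensor Lambda_k(V) consists of the elements
  e_(i1) ... e_(ij) tensor e_(l1) wedge ... wedge e_(lk) (l1 < ... < lk), indexed by a
  multiset a of basis indices (size a = j) and a set I of basis indices (card I = k).\<close>

type_synonym xidx = "nat multiset \<times> nat set"

definition valid_idx :: "nat \<Rightarrow> xidx \<Rightarrow> bool" where
  "valid_idx n x \<longleftrightarrow> set_mset (fst x) \<subseteq> {..<n} \<and> snd x \<subseteq> {..<n}"

definition supp :: "(xidx \<Rightarrow> real) \<Rightarrow> xidx set" where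
  "supp A = {x. A x \<noteq> 0}"

definition XV :: "nat \<Rightarrow> (xidx \<Rightarrow> real) set" where
  "XV n = {A. finite (supp A) \<and> (\<forall>x\<in>supp A. valid_idx n x)}"

text \<open>e_I wedge e_J = wedge_sign I J * e_(I union J), with e_I the increasingly ordered wedge.\<close>
definition wedge_sign :: "nat set \<Rightarrow> nat set \<Rightarrow> real" where
  "wedge_sign I J = (if I \<inter> J = {} then (-1) ^ card {(i, j). i \<in> I \<and> j \<in> J \<and> j < i} else 0)"

definition bcoef :: "xidx \<Rightarrow> xidx \<Rightarrow> real" where
  "bcoef x y = wedge_sign (snd x) (snd y) *
     (if size (fst x) = 0 \<or> size (fst y) = 0 then 1
      else 1 / 2 ^ (size (fst x) + size (fst y)))"

definition bidx :: "xidx \<Rightarrow> xidx \<Rightarrow> xidx" where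
  "bidx x y = (fst x + fst y, snd x \<union> snd y)"

definition Xmult :: "(xidx \<Rightarrow> real) \<Rightarrow> (xidx \<Rightarrow> real) \<Rightarrow> (xidx \<Rightarrow> real)" where
  "Xmult A B = (\<lambda>z. \<Sum>(x, y) \<in> supp A \<times> supp B.
                     if bidx x y = z then A x * B y * bcoef x y else 0)"

text \<open>Norm of a basis element: product of |e_i| (=1) times mass of e_I (=1).\<close>
definition basis_norm :: "xidx \<Rightarrow> real" where
  "basis_norm x = (\<Prod>i\<in>#fst x. norm (1::real)) * 1"

definition Xnorm :: "(xidx \<Rightarrow> real) \<Rightarrow> real" where
  "Xnorm A = (\<Sum>x\<in>supp A. \<bar>A x\<bar> * basis_norm x)"

end

theory Submission
  imports Defs
begin

lemma bn1[simp]: "basis_norm x = 1"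
  by (simp add: basis_norm_def)

lemma Xnorm_alt: "Xnorm A = (\<Sum>x\<in>supp A. \<bar>A x\<bar>)"
  by (simp add: Xnorm_def)

lemma Xnorm_sup:
  assumes "finite S" "supp A \<subseteq> S"
  shows "Xnorm A = (\<Sum>x\<in>S. \<bar>A x\<bar>)"
  unfolding Xnorm_alt
  by (rule sum.mono_neutral_left[OF assms]) (auto simp: supp_def)

lemma bcoef_le: "\<bar>bcoef x y\<bar> \<le> 1"
  unfolding bcoef_def wedge_sign_def by (auto simp: abs_mult power_abs)

lemma mult_le:
  assumes A: "finite (supp A)" and B: "finite (supp B)"
  shows "Xnorm (Xmult A B) \<le> Xnorm A * Xnorm B"
proof -
  let ?P = "supp A \<times> supp B"
  let ?T = "(\<lambda>(x,y). bidx x y) ` ?P"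
  have fP: "finite ?P" using A B by simp
  have fT: "finite ?T" using fP by simp
  have sub: "supp (Xmult A B) \<subseteq> ?T"
  proof
    fix z assume "z \<in> supp (Xmult A B)"
    then have "Xmult A B z \<noteq> 0" by (simp add: supp_def)
    then obtain p where "p \<in> ?P" "(case p of (x,y) \<Rightarrow> if bidx x y = z then A x * B y * bcoef x y else 0) \<noteq> 0"
      unfolding Xmult_def using sum.neutral by (metis (no_types, lifting))
    then show "z \<in> ?T" by (auto split: if_splits)
  qed
  have "Xnorm (Xmult A B) = (\<Sum>z\<in>?T. \<bar>Xmult A B z\<bar>)" by (rule Xnorm_sup[OF fT sub])
  also have "\<dots> \<le> (\<Sum>z\<in>?T. \<Sum>p\<in>?P. \<bar>case p of (x,y) \<Rightarrow> if bidx x y = z then A x * B y * bcoef x y else 0\<bar>)"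
    unfolding Xmult_def by (intro sum_mono sum_abs)
  also have "\<dots> = (\<Sum>p\<in>?P. \<Sum>z\<in>?T. \<bar>case p of (x,y) \<Rightarrow> if bidx x y = z then A x * B y * bcoef x y else 0\<bar>)"
    by (rule sum.swap)
  also have "\<dots> = (\<Sum>p\<in>?P. \<bar>case p of (x,y) \<Rightarrow> A x * B y * bcoef x y\<bar>)"
  proof (rule sum.cong[OF refl])
    fix p assume p: "p \<in> ?P"
    obtain x y where pxy: "p = (x,y)" by (cases p)
    have "bidx x y \<in> ?T" using p pxy by force
    then show "(\<Sum>z\<in>?T. \<bar>case p of (x,y) \<Rightarrow> if bidx x y = z then A x * B y * bcoef x y else 0\<bar>)
       = \<bar>case p of (x,y) \<Rightarrow> A x * B y * bcoef x y\<bar>"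
      using fT by (simp add: pxy if_distrib[where f=abs] sum.delta cong: if_cong)
  qed
  also have "\<dots> \<le> (\<Sum>p\<in>?P. \<bar>A (fst p)\<bar> * \<bar>B (snd p)\<bar>)"
  proof (rule sum_mono)
    fix p :: "xidx \<times> xidx"
    obtain x y where pxy: "p = (x,y)" by (cases p)
    have "\<bar>A x * B y * bcoef x y\<bar> \<le> \<bar>A x * B y\<bar> * 1"
      unfolding abs_mult[of "A x * B y"] by (intro mult_left_mono bcoef_le) auto
    then show "\<bar>case p of (x,y) \<Rightarrow> A x * B y * bcoef x y\<bar> \<le> \<bar>A (fst p)\<bar> * \<bar>B (snd p)\<bar>"
      by (simp add: pxy abs_mult)
  qed
  also have "\<dots> = Xnorm A * Xnorm B"
    unfolding Xnorm_alt sum_product sum.cartesian_product by (simp add: case_prod_beta)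
  finally show ?thesis .
qed

theorem mainTheorem1:
  fixes n :: nat
  shows "(\<forall>A\<in>XV n. Xnorm A \<ge> 0 \<and> (Xnorm A = 0 \<longleftrightarrow> A = (\<lambda>_. 0))) \<and>
         (\<forall>A\<in>XV n. \<forall>c::real. Xnorm (\<lambda>x. c * A x) = \<bar>c\<bar> * Xnorm A) \<and>
         (\<forall>A\<in>XV n. \<forall>B\<in>XV n. Xnorm (\<lambda>x. A x + B x) \<le> Xnorm A + Xnorm B) \<and>
         (\<forall>A\<in>XV n. \<forall>B\<in>XV n. Xnorm (Xmult A B) \<le> Xnorm A * Xnorm B)"
proof (intro conjI ballI allI)
  fix A assume "A \<in> XV n"
  then have fA: "finite (supp A)" by (simp add: XV_def)
  show "Xnorm A \<ge> 0" unfolding Xnorm_alt by (simp add: sum_nonneg)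
  show "Xnorm A = 0 \<longleftrightarrow> A = (\<lambda>_. 0)"
  proof
    assume "Xnorm A = 0"
    then have "\<forall>x\<in>supp A. \<bar>A x\<bar> = 0" unfolding Xnorm_alt using fA
      by (subst (asm) sum_nonneg_eq_0_iff) auto
    then show "A = (\<lambda>_. 0)" by (auto simp: supp_def)
  next
    assume "A = (\<lambda>_. 0)" then show "Xnorm A = 0" by (simp add: Xnorm_alt supp_def)
  qed
  fix c :: real
  show "Xnorm (\<lambda>x. c * A x) = \<bar>c\<bar> * Xnorm A"
  proof -
    have "Xnorm (\<lambda>x. c * A x) = (\<Sum>x\<in>supp A. \<bar>c * A x\<bar>)"
      by (rule Xnorm_sup[OF fA]) (auto simp: supp_def)
    then show ?thesis by (simp add: Xnorm_alt abs_mult sum_distrib_left)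
  qed
next
  fix A B assume "A \<in> XV n" "B \<in> XV n"
  then have fA: "finite (supp A)" and fB: "finite (supp B)" by (auto simp: XV_def)
  have fU: "finite (supp A \<union> supp B)" using fA fB by simp
  have "Xnorm (\<lambda>x. A x + B x) = (\<Sum>x\<in>supp A \<union> supp B. \<bar>A x + B x\<bar>)"
    by (rule Xnorm_sup[OF fU]) (auto simp: supp_def)
  also have "\<dots> \<le> (\<Sum>x\<in>supp A \<union> supp B. \<bar>A x\<bar> + \<bar>B x\<bar>)"
    by (intro sum_mono abs_triangle_ineq)
  also have "\<dots> = Xnorm A + Xnorm B"
    by (simp add: sum.distrib Xnorm_sup[OF fU] del: bn1)
  finally show "Xnorm (\<lambda>x. A x + B x) \<le> Xnorm A + Xnorm B" .
  show "Xnorm (Xmult A B) \<le> Xnorm A * Xnorm B" by (rule mult_le[OF fA fB])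
qed

end
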